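(* Let $\Gamma=\langle V,(w_u)_{u\in V},\alpha,\beta\rangle$ be a celebrity game with $\beta>1$, $n=|V|$, $W=\sum_{u\in V}w_u$, $w_{\max}=\max_{u}w_u$, and suppose $\alpha\ge w_{\max}$. If there is more than one vertex $u\in V$ with $\alpha>W-w_u$, then the edgeless graph $I_n$ is the unique Nash equilibrium graph of $\Gamma$; otherwise a star graph $S_n$ on $V$ (a tree with one vertex adjacent to all others) is a Nash equilibrium graph of $\Gamma$.
   Context: A celebrity game $\Gamma=\langle V,(w_u)_{u\in V},\alpha,\beta\rangle$ consists of a set of players $V=\{1,\dots,n\}$, celebrity weights $w_u>0$, a link cost $\alpha>0$ and a critical distance $\beta$ with $1\le\beta\le n-1$. A strategy of player $u$ is a set $S_u\subseteq V\setminus\{u\}$; a strategy profile is $S=(S_1,\dots,S_n)$; its outcome graph $G[S]$ is the undirected graph on $V$ with edge set $\{\{u,v\}: u\in S_v\text{ or }v\in S_u\}$. With $d_G$ the graph distance (infinite between different connected components), the cost of player $u$ is $c_u(S)=\alpha|S_u|+\sum_{v:\,d_{G[S]}(u,v)>\beta}w_v$. $S$ is a Nash equilibrium if no player can strictly decrease its cost by changing only its own strategy; a graph $G$ is a Nash equilibrium graph of $\Gamma$ if $G=G[S]$ for some Nash equilibrium $S$. *)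

theory Defs
  imports Main "HOL-Library.Extended_Nat"
begin

text \<open>A graph on V is given by its edge set,
  a set of two-element vertex sets. Strategy profiles are functions S :: nat => nat set;
  only the values S u for u in V matter.\<close>

definition players :: "nat \<Rightarrow> nat set" where
  "players n = {1..n}"

definition celebrity_game :: "nat \<Rightarrow> (nat \<Rightarrow> real) \<Rightarrow> real \<Rightarrow> nat \<Rightarrow> bool" where
  "celebrity_game n w \<alpha> \<beta> \<longleftrightarrow>
     (\<forall>u\<in>players n. w u > 0) \<and> \<alpha> > 0 \<and> 1 \<le> \<beta> \<and> \<beta> \<le> n - 1"

definition valid_profile :: "nat \<Rightarrow> (nat \<Rightarrow> nat set) \<Rightarrow> bool" where
  "valid_profile n S \<longleftrightarrow> (\<forall>u\<in>players n. S u \<subseteq> players n - {u})"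

definition outcome_graph :: "nat \<Rightarrow> (nat \<Rightarrow> nat set) \<Rightarrow> nat set set" where
  "outcome_graph n S =
     {{u, v} | u v. u \<in> players n \<and> v \<in> players n \<and> (u \<in> S v \<or> v \<in> S u)}"

definition is_walk :: "nat set set \<Rightarrow> nat list \<Rightarrow> bool" where
  "is_walk E xs \<longleftrightarrow> xs \<noteq> [] \<and> (\<forall>i. Suc i < length xs \<longrightarrow> {xs ! i, xs ! Suc i} \<in> E)"

text \<open>Graph distance, infinite between different components.\<close>
definition graph_dist :: "nat set set \<Rightarrow> nat \<Rightarrow> nat \<Rightarrow> enat" where
  "graph_dist E u v =
     (INF xs \<in> {xs. is_walk E xs \<and> hd xs = u \<and> last xs = v}. enat (length xs - 1))"

definition player_cost ::
  "nat \<Rightarrow> (nat \<Rightarrow> real) \<Rightarrow> real \<Rightarrow> nat \<Rightarrow> (nat \<Rightarrow> nat set) \<Rightarrow> nat \<Rightarrow> real" where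
  "player_cost n w \<alpha> \<beta> S u =
     \<alpha> * real (card (S u)) +
     (\<Sum>v \<in> {v \<in> players n. graph_dist (outcome_graph n S) u v > enat \<beta>}. w v)"

definition nash_equilibrium ::
  "nat \<Rightarrow> (nat \<Rightarrow> real) \<Rightarrow> real \<Rightarrow> nat \<Rightarrow> (nat \<Rightarrow> nat set) \<Rightarrow> bool" where
  "nash_equilibrium n w \<alpha> \<beta> S \<longleftrightarrow> valid_profile n S \<and>
     (\<forall>u \<in> players n. \<forall>T. T \<subseteq> players n - {u} \<longrightarrow>
        player_cost n w \<alpha> \<beta> S u \<le> player_cost n w \<alpha> \<beta> (S(u := T)) u)"

definition NE_graph :: "nat \<Rightarrow> (nat \<Rightarrow> real) \<Rightarrow> real \<Rightarrow> nat \<Rightarrow> nat set set \<Rightarrow> bool" where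
  "NE_graph n w \<alpha> \<beta> G \<longleftrightarrow> (\<exists>S. nash_equilibrium n w \<alpha> \<beta> S \<and> G = outcome_graph n S)"

definition edgeless_graph :: "nat set set" where
  "edgeless_graph = {}"

definition is_star_graph :: "nat \<Rightarrow> nat set set \<Rightarrow> bool" where
  "is_star_graph n G \<longleftrightarrow> (\<exists>c \<in> players n. G = {{c, v} | v. v \<in> players n \<and> v \<noteq> c})"

end

theory Submission
  imports Defs
begin

lemma walk_closed:
  assumes "is_walk E xs" "hd xs \<in> P" "\<And>x y. {x,y} \<in> E \<Longrightarrow> x \<in> P \<Longrightarrow> y \<in> P"
  shows "last xs \<in> P"
proof -
  have "\<forall>i<length xs. xs ! i \<in> P"
  proof (intro allI impI)
    fix i assume "i < length xs"
    then show "xs ! i \<in> P"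
    proof (induction i)
      case 0 then show ?case using assms(1,2) by (simp add: hd_conv_nth is_walk_def)
    next
      case (Suc i)
      then have "{xs!i, xs!Suc i} \<in> E" using assms(1) by (auto simp: is_walk_def)
      with Suc show ?case using assms(3) by auto
    qed
  qed
  then show ?thesis using assms(1) by (simp add: last_conv_nth is_walk_def)
qed

lemma dist_self: "graph_dist E u u = 0"
proof -
  have "[u] \<in> {xs. is_walk E xs \<and> hd xs = u \<and> last xs = u}" by (simp add: is_walk_def)
  then have "graph_dist E u u \<le> enat (length [u] - 1)" unfolding graph_dist_def by (rule INF_lower)
  then show ?thesis by (simp add: zero_enat_def[symmetric])
qed

lemma dist_walk:
  assumes "graph_dist E u v \<noteq> \<infinity>"
  shows "\<exists>xs. is_walk E xs \<and> hd xs = u \<and> last xs = v"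
proof (rule ccontr)
  assume "\<not> ?thesis"
  then have e: "{xs. is_walk E xs \<and> hd xs = u \<and> last xs = v} = {}" by auto
  show False using assms unfolding graph_dist_def e by (simp add: top_enat_def)
qed

lemma dist_le:
  assumes "is_walk E xs" "hd xs = u" "last xs = v" "length xs \<le> Suc k"
  shows "graph_dist E u v \<le> enat k"
proof -
  have "graph_dist E u v \<le> enat (length xs - 1)" unfolding graph_dist_def
    by (rule INF_lower) (use assms in auto)
  also have "... \<le> enat k" using assms(4) by simp
  finally show ?thesis .
qed

lemma dist_inf:
  assumes "\<And>xs. is_walk E xs \<Longrightarrow> hd xs = u \<Longrightarrow> last xs \<noteq> v"
  shows "graph_dist E u v = \<infinity>"
proof -
  have e: "{xs. is_walk E xs \<and> hd xs = u \<and> last xs = v} = {}" using assms by auto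
  show ?thesis unfolding graph_dist_def e by (simp add: top_enat_def)
qed

lemma far_sub: "{v \<in> players n. graph_dist E u v > enat \<beta>} \<subseteq> players n - {u}"
  using dist_self[of E u] by auto

lemma fin_players[simp]: "finite (players n)" by (simp add: players_def)

lemma cost_empty_le:
  assumes "\<forall>v\<in>players n. w v > 0" "u \<in> players n"
  shows "player_cost n w \<alpha> \<beta> (S(u:={})) u \<le> (\<Sum>v\<in>players n. w v) - w u"
proof -
  have "player_cost n w \<alpha> \<beta> (S(u:={})) u = (\<Sum>v\<in>{v \<in> players n. graph_dist (outcome_graph n (S(u:={}))) u v > enat \<beta>}. w v)"
    by (simp add: player_cost_def)
  also have "... \<le> (\<Sum>v\<in>players n - {u}. w v)"
    apply (rule sum_mono2) using far_sub assms by (auto simp: less_imp_le)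
  also have "... = (\<Sum>v\<in>players n. w v) - w u"
    using assms by (simp add: sum_diff1)
  finally show ?thesis .
qed

lemma cost_lower0:
  assumes "\<forall>v\<in>players n. w v > 0"
  shows "player_cost n w \<alpha> \<beta> S u \<ge> \<alpha> * card (S u)"
proof -
  have "0 \<le> (\<Sum>v\<in>{v \<in> players n. graph_dist (outcome_graph n S) u v > enat \<beta>}. w v)"
    using assms by (intro sum_nonneg) (auto simp: less_imp_le)
  then show ?thesis unfolding player_cost_def by simp
qed

lemma cost_lower:
  assumes "\<forall>v\<in>players n. w v > 0" "x \<in> players n" "graph_dist (outcome_graph n S) u x > enat \<beta>"
  shows "player_cost n w \<alpha> \<beta> S u \<ge> \<alpha> * card (S u) + w x"
  unfolding player_cost_def
  apply (rule add_left_mono)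
  apply (rule member_le_sum)
  using assms by (auto simp: less_imp_le)

lemma cost_lower_set:
  assumes "\<forall>v\<in>players n. w v > 0" "X \<subseteq> players n" 
    "\<And>x. x \<in> X \<Longrightarrow> graph_dist (outcome_graph n S) u x > enat \<beta>"
  shows "player_cost n w \<alpha> \<beta> S u \<ge> \<alpha> * card (S u) + (\<Sum>x\<in>X. w x)"
  unfolding player_cost_def
  apply (rule add_left_mono)
  apply (rule sum_mono2)
  using assms by (auto simp: less_imp_le)


lemma walk2: "is_walk E [a,b] \<longleftrightarrow> {a,b} \<in> E"
  by (auto simp: is_walk_def)

lemma walk3: "is_walk E [a,b,c] \<longleftrightarrow> {a,b} \<in> E \<and> {b,c} \<in> E"
proof -
  have "(\<forall>i. Suc i < 3 \<longrightarrow> {[a,b,c] ! i, [a,b,c] ! Suc i} \<in> E) \<longleftrightarrow> {a,b} \<in> E \<and> {b,c} \<in> E"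
  proof
    assume h: "\<forall>i. Suc i < 3 \<longrightarrow> {[a,b,c] ! i, [a,b,c] ! Suc i} \<in> E"
    show "{a,b} \<in> E \<and> {b,c} \<in> E" using h[rule_format, of 0] h[rule_format, of 1] by simp
  next
    assume "{a,b} \<in> E \<and> {b,c} \<in> E"
    then show "\<forall>i. Suc i < 3 \<longrightarrow> {[a,b,c] ! i, [a,b,c] ! Suc i} \<in> E"
      by (auto simp: less_Suc_eq numeral_3_eq_3)
  qed
  then show ?thesis by (simp add: is_walk_def numeral_2_eq_2)
qed

lemma edgeless_NE:
  assumes game: "celebrity_game n w \<alpha> \<beta>" and alpha_ge: "\<alpha> \<ge> Max (w ` players n)"
  shows "NE_graph n w \<alpha> \<beta> edgeless_graph"
proof -
  define S0 :: "nat \<Rightarrow> nat set" where "S0 = (\<lambda>_. {})"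
  have wpos: "\<forall>v\<in>players n. w v > 0" using game by (simp add: celebrity_game_def)
  have G: "outcome_graph n S0 = edgeless_graph" by (simp add: outcome_graph_def edgeless_graph_def S0_def)
  have "nash_equilibrium n w \<alpha> \<beta> S0"
    unfolding nash_equilibrium_def
  proof (intro conjI ballI allI impI)
    show "valid_profile n S0" by (simp add: valid_profile_def S0_def)
  next
    fix u T assume u: "u \<in> players n" and T: "T \<subseteq> players n - {u}"
    have "player_cost n w \<alpha> \<beta> S0 u = player_cost n w \<alpha> \<beta> (S0(u:={})) u" by (simp add: S0_def fun_upd_def)
    also have "... \<le> (\<Sum>v\<in>players n. w v) - w u" by (rule cost_empty_le[OF wpos u])
    also have "... = (\<Sum>v\<in>T. w v) + (\<Sum>v\<in>players n - {u} - T. w v)"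
    proof -
      have "(\<Sum>v\<in>players n - {u}. w v) = (\<Sum>v\<in>players n - {u} - T. w v) + (\<Sum>v\<in>T. w v)"
        using T by (intro sum.subset_diff) auto
      then show ?thesis using u by (simp add: sum_diff1)
    qed
    also have "... \<le> \<alpha> * card T + (\<Sum>v\<in>players n - {u} - T. w v)"
    proof -
      have "(\<Sum>v\<in>T. w v) \<le> of_nat (card T) * \<alpha>"
      proof (rule sum_bounded_above)
        fix i assume "i \<in> T"
        then have "w i \<le> Max (w ` players n)" using T by (intro Max_ge) auto
        then show "w i \<le> \<alpha>" using alpha_ge by simp
      qed
      then show ?thesis by (simp add: mult.commute)
    qed
    also have "... \<le> player_cost n w \<alpha> \<beta> (S0(u := T)) u"
    proof -
      have "player_cost n w \<alpha> \<beta> (S0(u := T)) u \<ge> \<alpha> * card ((S0(u := T)) u) + (\<Sum>x\<in>players n - {u} - T. w x)"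
      proof (rule cost_lower_set[OF wpos])
        fix x assume x: "x \<in> players n - {u} - T"
        have "graph_dist (outcome_graph n (S0(u := T))) u x = \<infinity>"
        proof (rule dist_inf)
          fix xs assume wk: "is_walk (outcome_graph n (S0(u := T))) xs" and hd: "hd xs = u"
          have cl: "\<And>a b. {a,b} \<in> outcome_graph n (S0(u := T)) \<Longrightarrow> a \<in> insert u T \<Longrightarrow> b \<in> insert u T"
            by (auto simp: outcome_graph_def S0_def doubleton_eq_iff split: if_splits)
          have "last xs \<in> insert u T" using walk_closed[OF wk _ cl] hd by simp
          then show "last xs \<noteq> x" using x by auto
        qed
        then show "graph_dist (outcome_graph n (S0(u := T))) u x > enat \<beta>" by simp
      qed auto
      then show ?thesis by simp
    qed
    finally show "player_cost n w \<alpha> \<beta> S0 u \<le> player_cost n w \<alpha> \<beta> (S0(u := T)) u" .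
  qed
  then show ?thesis unfolding NE_graph_def using G by metis
qed


lemma unique_edgeless:
  assumes game: "celebrity_game n w \<alpha> \<beta>"
    and Acard: "card {u \<in> players n. \<alpha> > (\<Sum>v\<in>players n. w v) - w u} > 1"
    and NE: "nash_equilibrium n w \<alpha> \<beta> S"
  shows "outcome_graph n S = {}"
proof (rule ccontr)
  define W where "W = (\<Sum>v\<in>players n. w v)"
  define A where "A = {u \<in> players n. \<alpha> > W - w u}"
  assume ne: "outcome_graph n S \<noteq> {}"
  have wpos: "\<forall>v\<in>players n. w v > 0" and apos: "\<alpha> > 0" using game by (auto simp: celebrity_game_def)
  have valid: "valid_profile n S"
    and eq: "\<And>u T. u \<in> players n \<Longrightarrow> T \<subseteq> players n - {u} \<Longrightarrow>
        player_cost n w \<alpha> \<beta> S u \<le> player_cost n w \<alpha> \<beta> (S(u := T)) u"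
    using NE unfolding nash_equilibrium_def by auto
  have Su: "\<And>u. u \<in> players n \<Longrightarrow> S u \<subseteq> players n - {u}" using valid by (auto simp: valid_profile_def)
  have ub: "\<And>u. u \<in> players n \<Longrightarrow> player_cost n w \<alpha> \<beta> S u \<le> W - w u"
  proof -
    fix u assume u: "u \<in> players n"
    have "player_cost n w \<alpha> \<beta> S u \<le> player_cost n w \<alpha> \<beta> (S(u := {})) u" using eq[OF u] by simp
    also have "... \<le> W - w u" unfolding W_def by (rule cost_empty_le[OF wpos u])
    finally show "player_cost n w \<alpha> \<beta> S u \<le> W - w u" .
  qed
  have cardA: "card A > 1" using Acard unfolding A_def W_def by simp
  then have "A \<noteq> {}" by auto
  then obtain u1 where u1: "u1 \<in> A" by auto
  obtain u2 where u2: "u2 \<in> A" "u2 \<noteq> u1"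
  proof -
    have "\<not> A \<subseteq> {u1}"
    proof
      assume "A \<subseteq> {u1}"
      then have "card A \<le> card {u1}" by (intro card_mono) auto
      then show False using cardA by simp
    qed
    then show ?thesis using that by auto
  qed
  have u1p: "u1 \<in> players n" and u2p: "u2 \<in> players n" using u1 u2 by (auto simp: A_def)
  have a1: "\<alpha> > W - w u1" and a2: "\<alpha> > W - w u2" using u1 u2 by (auto simp: A_def)
  have A_empty: "\<And>u. u \<in> A \<Longrightarrow> S u = {}"
  proof (rule ccontr)
    fix u assume u: "u \<in> A" "S u \<noteq> {}"
    have up: "u \<in> players n" using u by (simp add: A_def)
    have fin: "finite (S u)" using Su[OF up] by (meson finite_Diff fin_players finite_subset)
    then have "card (S u) \<ge> 1" using u(2) by (simp add: Suc_le_eq card_gt_0_iff)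
    then have "\<alpha> * 1 \<le> \<alpha> * card (S u)" using apos by (intro mult_left_mono) auto
    also have "... \<le> player_cost n w \<alpha> \<beta> S u" by (rule cost_lower0[OF wpos])
    also have "... \<le> W - w u" by (rule ub[OF up])
    finally show False using u(1) unfolding A_def by auto
  qed
  have W12: "w u1 + w u2 \<le> W"
  proof -
    have "(\<Sum>v\<in>{u1,u2}. w v) \<le> W" unfolding W_def
      using u1p u2p wpos by (intro sum_mono2) (auto simp: less_imp_le)
    then show ?thesis using u2(2) by simp
  qed
  have card1: "\<And>v. v \<in> players n \<Longrightarrow> card (S v) \<le> 1"
  proof (rule ccontr)
    fix v assume v: "v \<in> players n" "\<not> card (S v) \<le> 1"
    then have "2 \<le> real (card (S v))" by simp
    then have "\<alpha> * 2 \<le> \<alpha> * card (S v)" using apos by (intro mult_left_mono) auto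
    also have "... \<le> player_cost n w \<alpha> \<beta> S v" by (rule cost_lower0[OF wpos])
    also have "... \<le> W - w v" by (rule ub[OF v(1)])
    finally show False using a1 a2 W12 wpos v(1) by fastforce
  qed
  define f where "f x = (if S x = {} then x else the_elem (S x))" for x
  have Sf: "\<And>b. b \<in> players n \<Longrightarrow> S b \<noteq> {} \<Longrightarrow> S b = {f b}"
  proof -
    fix b assume b: "b \<in> players n" "S b \<noteq> {}"
    have fin: "finite (S b)" using Su[OF b(1)] by (meson finite_Diff fin_players finite_subset)
    then have "card (S b) = 1" using card1[OF b(1)] b(2) by (simp add: le_Suc_eq card_gt_0_iff)
    then obtain x where "S b = {x}" by (auto simp: card_1_singleton_iff)
    then show "S b = {f b}" by (simp add: f_def)
  qed
  have mem: "\<And>a b. b \<in> players n \<Longrightarrow> a \<in> S b \<Longrightarrow> S b \<noteq> {} \<and> a = f b"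
    using Sf by fastforce
  have edges: "\<And>x y. {x,y} \<in> outcome_graph n S \<Longrightarrow> (x = f y \<and> S y \<noteq> {}) \<or> (y = f x \<and> S x \<noteq> {})"
  proof -
    fix x y assume "{x,y} \<in> outcome_graph n S"
    then obtain a b where ab: "{x,y} = {a,b}" "a \<in> players n" "b \<in> players n" "a \<in> S b \<or> b \<in> S a"
      unfolding outcome_graph_def by blast
    show "(x = f y \<and> S y \<noteq> {}) \<or> (y = f x \<and> S x \<noteq> {})"
      using ab(4)
    proof
      assume "a \<in> S b" then have "S b \<noteq> {} \<and> a = f b" using mem ab(3) by blast
      then show ?thesis using ab(1) by (auto simp: doubleton_eq_iff)
    next
      assume "b \<in> S a" then have "S a \<noteq> {} \<and> b = f a" using mem ab(2) by blast
      then show ?thesis using ab(1) by (auto simp: doubleton_eq_iff)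
    qed
  qed
  define R where "R a b = (\<exists>j k. (f^^j) a = (f^^k) b)" for a b
  have Rstep: "\<And>v x y. R v x \<Longrightarrow> {x,y} \<in> outcome_graph n S \<Longrightarrow> R v y"
  proof -
    fix v x y assume r: "R v x" and e: "{x,y} \<in> outcome_graph n S"
    obtain j k where jk: "(f^^j) v = (f^^k) x" using r by (auto simp: R_def)
    from edges[OF e] show "R v y"
    proof
      assume "x = f y \<and> S y \<noteq> {}"
      then have "(f^^j) v = (f^^Suc k) y" using jk by (simp add: funpow_swap1)
      then show ?thesis unfolding R_def by blast
    next
      assume h: "y = f x \<and> S x \<noteq> {}"
      show ?thesis
      proof (cases k)
        case 0
        then have "(f^^Suc j) v = (f^^0) y" using jk h by simp
        then show ?thesis unfolding R_def by blast
      next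
        case (Suc k')
        then have "(f^^j) v = (f^^k') y" using jk h by (simp add: funpow_swap1)
        then show ?thesis unfolding R_def by blast
      qed
    qed
  qed
  from ne obtain e where "e \<in> outcome_graph n S" by auto
  then obtain a b where ab: "a \<in> players n" "b \<in> players n" "a \<in> S b \<or> b \<in> S a"
    unfolding outcome_graph_def by blast
  obtain bb where bb: "bb \<in> players n" "S bb \<noteq> {}" using ab by blast
  have reach: "\<And>u. u \<in> A \<Longrightarrow> R bb u"
  proof -
    fix u assume uA: "u \<in> A"
    have up: "u \<in> players n" and au: "\<alpha> > W - w u" using uA by (auto simp: A_def)
    have "\<not> graph_dist (outcome_graph n S) bb u > enat \<beta>"
    proof
      assume far: "graph_dist (outcome_graph n S) bb u > enat \<beta>"
      have fin: "finite (S bb)" using Su[OF bb(1)] by (meson finite_Diff fin_players finite_subset)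
      then have "card (S bb) \<ge> 1" using bb(2) by (simp add: Suc_le_eq card_gt_0_iff)
      then have "\<alpha> * 1 \<le> \<alpha> * card (S bb)" using apos by (intro mult_left_mono) auto
      then have "\<alpha> + w u \<le> \<alpha> * card (S bb) + w u" by simp
      also have "... \<le> player_cost n w \<alpha> \<beta> S bb" by (rule cost_lower[OF wpos up far])
      also have "... \<le> W - w bb" by (rule ub[OF bb(1)])
      finally show False using au wpos bb(1) by fastforce
    qed
    then have "graph_dist (outcome_graph n S) bb u \<noteq> \<infinity>" by (metis enat_ord_code(4))
    then obtain xs where xs: "is_walk (outcome_graph n S) xs" "hd xs = bb" "last xs = u"
      using dist_walk by blast
    have "last xs \<in> {y. R bb y}"
      using walk_closed[OF xs(1), of "{y. R bb y}"] xs(2) Rstep by (auto simp: R_def)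
    then show "R bb u" using xs(3) by simp
  qed
  have fix1: "\<And>u k. u \<in> A \<Longrightarrow> (f^^k) u = u"
  proof -
    fix u k assume "u \<in> A"
    then have "f u = u" using A_empty by (simp add: f_def)
    then show "(f^^k) u = u" by (induct k) auto
  qed
  obtain j1 where j1: "(f^^j1) bb = u1" using reach[OF u1] fix1[OF u1] unfolding R_def by metis
  obtain j2 where j2: "(f^^j2) bb = u2" using reach[OF u2(1)] fix1[OF u2(1)] unfolding R_def by metis
  show False
  proof (cases "j1 \<le> j2")
    case True
    then have "(f^^j2) bb = (f^^(j2-j1)) ((f^^j1) bb)" by (metis funpow_add le_add_diff_inverse2 comp_apply)
    then have "u2 = u1" using j1 j2 fix1[OF u1] by simp
    then show False using u2 by simp
  next
    case False
    then have "(f^^j1) bb = (f^^(j1-j2)) ((f^^j2) bb)" by (metis funpow_add le_add_diff_inverse2 comp_apply nat_le_linear)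
    then have "u2 = u1" using j1 j2 fix1[OF u2(1)] by simp
    then show False using u2 by simp
  qed
qed


lemma star_NE:
  assumes game: "celebrity_game n w \<alpha> \<beta>" and beta_gt: "\<beta> > 1"
    and c: "c \<in> players n"
    and hc: "\<And>v. v \<in> players n \<Longrightarrow> v \<noteq> c \<Longrightarrow> \<alpha> \<le> (\<Sum>v\<in>players n. w v) - w v"
  shows "\<exists>G. is_star_graph n G \<and> NE_graph n w \<alpha> \<beta> G"
proof -
  define S where "S v = (if v \<in> players n \<and> v \<noteq> c then {c} else {})" for v
  define G where "G = {{c, v} | v. v \<in> players n \<and> v \<noteq> c}"
  have wpos: "\<forall>v\<in>players n. w v > 0" and apos: "\<alpha> > 0" using game by (auto simp: celebrity_game_def)
  have OG: "outcome_graph n S = G"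
    unfolding outcome_graph_def G_def S_def using c
    by (auto split: if_splits)
  have star: "is_star_graph n G" using c unfolding is_star_graph_def G_def by blast
  have inG: "\<And>v. v \<in> players n \<Longrightarrow> v \<noteq> c \<Longrightarrow> {c,v} \<in> outcome_graph n S \<and> {v,c} \<in> outcome_graph n S"
    unfolding OG G_def by (auto simp: insert_commute)
  have nofar: "\<And>u. u \<in> players n \<Longrightarrow> {v \<in> players n. graph_dist (outcome_graph n S) u v > enat \<beta>} = {}"
  proof -
    fix u assume u: "u \<in> players n"
    have "\<And>v. v \<in> players n \<Longrightarrow> graph_dist (outcome_graph n S) u v \<le> enat \<beta>"
    proof -
      fix v assume v: "v \<in> players n"
      show "graph_dist (outcome_graph n S) u v \<le> enat \<beta>"
      proof (cases "v = u")
        case True then show ?thesis by (simp add: dist_self)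
      next
        case vu: False
        show ?thesis
        proof (cases "u = c")
          case True
          then have "is_walk (outcome_graph n S) [u,v]" using inG[OF v] vu by (simp add: walk2)
          then show ?thesis using beta_gt by (intro dist_le[where xs="[u,v]"]) auto
        next
          case uc: False
          show ?thesis
          proof (cases "v = c")
            case True
            then have "is_walk (outcome_graph n S) [u,v]" using inG[OF u] uc by (simp add: walk2)
            then show ?thesis using beta_gt by (intro dist_le[where xs="[u,v]"]) auto
          next
            case False
            then have "is_walk (outcome_graph n S) [u,c,v]" using inG[OF u] inG[OF v] uc by (simp add: walk3)
            then show ?thesis using beta_gt by (intro dist_le[where xs="[u,c,v]"]) auto
          qed
        qed
      qed
    qed
    then show "{v \<in> players n. graph_dist (outcome_graph n S) u v > enat \<beta>} = {}"
      by (auto simp: not_less[symmetric])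
  qed
  have "nash_equilibrium n w \<alpha> \<beta> S"
    unfolding nash_equilibrium_def
  proof (intro conjI ballI allI impI)
    show "valid_profile n S" using c by (auto simp: valid_profile_def S_def)
  next
    fix u T assume u: "u \<in> players n" and T: "T \<subseteq> players n - {u}"
    have finT: "finite T" using T by (meson finite_Diff fin_players finite_subset)
    show "player_cost n w \<alpha> \<beta> S u \<le> player_cost n w \<alpha> \<beta> (S(u := T)) u"
    proof (cases "u = c")
      case True
      have "player_cost n w \<alpha> \<beta> S u = 0" using True unfolding player_cost_def nofar[OF u] by (simp add: S_def)
      also have "0 \<le> \<alpha> * card ((S(u := T)) u)" using apos by simp
      also have "... \<le> player_cost n w \<alpha> \<beta> (S(u := T)) u" by (rule cost_lower0[OF wpos])
      finally show ?thesis .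
    next
      case uc: False
      have "player_cost n w \<alpha> \<beta> S u = \<alpha>" using uc u unfolding player_cost_def nofar[OF u] by (simp add: S_def)
      also have "\<alpha> \<le> player_cost n w \<alpha> \<beta> (S(u := T)) u"
      proof (cases "T = {}")
        case False
        then have "card T \<ge> 1" using finT by (simp add: Suc_le_eq card_gt_0_iff)
        then have "\<alpha> * 1 \<le> \<alpha> * card T" using apos by (intro mult_left_mono) auto
        also have "... \<le> player_cost n w \<alpha> \<beta> (S(u := T)) u" using cost_lower0[OF wpos, where S="S(u:=T)" and u=u] by simp
        finally show ?thesis by simp
      next
        case True
        have "\<alpha> \<le> (\<Sum>v\<in>players n. w v) - w u" by (rule hc[OF u uc])
        also have "... = (\<Sum>v\<in>players n - {u}. w v)" using u by (simp add: sum_diff1)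
        also have "... \<le> \<alpha> * card ((S(u := T)) u) + (\<Sum>v\<in>players n - {u}. w v)" using True by simp
        also have "... \<le> player_cost n w \<alpha> \<beta> (S(u := T)) u"
        proof (rule cost_lower_set[OF wpos])
          fix x assume x: "x \<in> players n - {u}"
          have "graph_dist (outcome_graph n (S(u := T))) u x = \<infinity>"
          proof (rule dist_inf)
            fix xs assume wk: "is_walk (outcome_graph n (S(u := T))) xs" and hd: "hd xs = u"
            have cl: "\<And>a b. {a,b} \<in> outcome_graph n (S(u := T)) \<Longrightarrow> a \<in> {u} \<Longrightarrow> b \<in> {u}"
              using True uc by (auto simp: outcome_graph_def S_def doubleton_eq_iff split: if_splits)
            have "last xs \<in> {u}" using walk_closed[OF wk _ cl] hd by simp
            then show "last xs \<noteq> x" using x by auto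
          qed
          then show "graph_dist (outcome_graph n (S(u := T))) u x > enat \<beta>" by simp
        qed auto
        finally show ?thesis .
      qed
      finally show ?thesis .
    qed
  qed
  then show ?thesis using star OG unfolding NE_graph_def by metis
qed

theorem proposition5:
  fixes n :: nat and w :: "nat \<Rightarrow> real" and \<alpha> :: real and \<beta> :: nat
  assumes game: "celebrity_game n w \<alpha> \<beta>"
    and beta_gt: "\<beta> > 1"
    and alpha_ge: "\<alpha> \<ge> Max (w ` players n)"
  shows "(card {u \<in> players n. \<alpha> > (\<Sum>v\<in>players n. w v) - w u} > 1 \<longrightarrow>
            NE_graph n w \<alpha> \<beta> edgeless_graph \<and>
            (\<forall>G. NE_graph n w \<alpha> \<beta> G \<longrightarrow> G = edgeless_graph))
       \<and> (\<not> card {u \<in> players n. \<alpha> > (\<Sum>v\<in>players n. w v) - w u} > 1 \<longrightarrow>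
            (\<exists>G. is_star_graph n G \<and> NE_graph n w \<alpha> \<beta> G))"
proof (intro conjI impI allI)
  assume "card {u \<in> players n. \<alpha> > (\<Sum>v\<in>players n. w v) - w u} > 1"
  show "NE_graph n w \<alpha> \<beta> edgeless_graph" by (rule edgeless_NE[OF game alpha_ge])
next
  fix G assume A: "card {u \<in> players n. \<alpha> > (\<Sum>v\<in>players n. w v) - w u} > 1"
    and "NE_graph n w \<alpha> \<beta> G"
  then obtain S where "nash_equilibrium n w \<alpha> \<beta> S" "G = outcome_graph n S"
    unfolding NE_graph_def by blast
  then show "G = edgeless_graph" using unique_edgeless[OF game A] by (simp add: edgeless_graph_def)
next
  define A where "A = {u \<in> players n. \<alpha> > (\<Sum>v\<in>players n. w v) - w u}"
  assume "\<not> card {u \<in> players n. \<alpha> > (\<Sum>v\<in>players n. w v) - w u} > 1"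
  then have cA: "card A \<le> 1" unfolding A_def by simp
  have finA: "finite A" unfolding A_def by simp
  have n3: "1 \<in> players n" using game beta_gt by (auto simp: celebrity_game_def players_def)
  obtain c where c: "c \<in> players n" and hc: "\<And>v. v \<in> players n \<Longrightarrow> v \<noteq> c \<Longrightarrow> v \<notin> A"
  proof (cases "A = {}")
    case True then show ?thesis using that n3 by blast
  next
    case False
    then have "card A = 1" using cA finA by (simp add: le_Suc_eq card_gt_0_iff)
    then obtain a where "A = {a}" by (auto simp: card_1_singleton_iff)
    then show ?thesis using that by (auto simp: A_def)
  qed
  show "\<exists>G. is_star_graph n G \<and> NE_graph n w \<alpha> \<beta> G"
    by (rule star_NE[OF game beta_gt c]) (use hc in \<open>auto simp: A_def not_less\<close>)
qed

end
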